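(* Let $b>0$ and let $x_0,x_\infty$ be as in the context. Then $x_\infty<x_0$.
   Context: Constants: $a\in\mathbb{R}$, $b>0$, $\sigma>0$, $\rho>0$, $c>0$. For $\beta<0$, let $D_\beta(x)=\frac{e^{-x^2/4}}{\Gamma(-\beta)}\int_0^\infty t^{-\beta-1}e^{-t^2/2-xt}\,dt$, and $\psi(x)=e^{\frac{(bx-a)^2}{2\sigma^2 b}}D_{-\rho/b}\big(-\frac{bx-a}{\sigma b}\sqrt{2b}\big)$, the positive strictly increasing fundamental solution of $\frac12\sigma^2u''+(a-bx)u'-\rho u=0$. Let $x_0$ be the unique solution on $(c,\infty)$ of $(x-c)\psi'(x)-\psi(x)=0$ and $x_\infty$ the unique solution on $(c,\infty)$ of $(x-c)\psi''(x)-\psi'(x)=0$ (these exist and are unique). *)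

theory Defs
  imports "HOL-Analysis.Analysis"
begin

text \<open>Parabolic cylinder function D_beta for beta < 0 (integral representation).\<close>
definition parD :: "real \<Rightarrow> real \<Rightarrow> real" where
  "parD \<beta> x = exp (- (x\<^sup>2) / 4) / Gamma (- \<beta>) *
      integral {0<..} (\<lambda>t. t powr (- \<beta> - 1) * exp (- (t\<^sup>2) / 2 - x * t))"

text \<open>The increasing fundamental solution psi.\<close>
definition psi :: "real \<Rightarrow> real \<Rightarrow> real \<Rightarrow> real \<Rightarrow> real \<Rightarrow> real" where
  "psi a b \<sigma> \<rho> x = exp ((b * x - a)\<^sup>2 / (2 * \<sigma>\<^sup>2 * b)) *
      parD (- \<rho> / b) (- ((b * x - a) / (\<sigma> * b)) * sqrt (2 * b))"

end

theory Submission imports Defs begin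

definition fI :: "real \<Rightarrow> nat \<Rightarrow> real \<Rightarrow> real \<Rightarrow> real" where
  "fI p n z t = t^n * t powr (p-1) * exp(-(t^2)/2 - z*t)"

lemma exp_taylor2: fixes u :: real shows "\<bar>exp u - 1 - u\<bar> \<le> u^2 * exp \<bar>u\<bar>"
proof -
  obtain s where s: "\<bar>s\<bar> \<le> \<bar>u\<bar>" "exp u = (\<Sum>m<2. u^m / fact m) + exp s / fact 2 * u^2"
    using Maclaurin_exp_le[of u 2] by blast
  have e: "exp s \<le> exp \<bar>u\<bar>" using s(1) by simp
  have eq1: "exp u - 1 - u = exp s / 2 * u^2" using s(2) by (simp add: eval_nat_numeral)
  have nn: "exp s / 2 * u^2 \<ge> 0" by simp
  have ab: "\<bar>exp u - 1 - u\<bar> = exp s / 2 * u^2" unfolding eq1 using nn by (rule abs_of_nonneg)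
  have "exp s / 2 \<le> exp \<bar>u\<bar>" using e exp_gt_zero[of s] by linarith
  hence "u^2 * (exp s / 2) \<le> u^2 * exp \<bar>u\<bar>" by (rule mult_left_mono) simp
  thus ?thesis using ab by (simp add: mult.commute)
qed

lemma gamma_real_integrable:
  fixes s :: real assumes s: "s > 0"
  shows "(\<lambda>t. t powr (s-1) * exp(-t)) integrable_on {0<..}"
proof -
  have "(\<lambda>t. complex_of_real t powr (complex_of_real s - 1) / of_real (exp (1 * t)))
             absolutely_integrable_on {0<..}"
    by (rule absolutely_integrable_Gamma_integral) (use s in auto)
  hence h: "(\<lambda>t. norm (complex_of_real t powr (complex_of_real s - 1) / of_real (exp (1 * t))))
             integrable_on {0<..}"
    by (simp add: absolutely_integrable_on_def)
  have eq: "norm (complex_of_real t powr (complex_of_real s - 1) / of_real (exp (1 * t)))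
     = t powr (s-1) * exp(-t)" if "t \<in> {0<..}" for t
  proof -
    have t: "t > 0" using that by simp
    have 1: "cmod (complex_of_real t powr (complex_of_real s - 1)) = t powr (s-1)"
      using norm_powr_real_powr[of "complex_of_real t" "complex_of_real s - 1"] t by simp
    have 2: "cmod (complex_of_real (exp (1*t))) = exp t" by simp
    have "norm (complex_of_real t powr (complex_of_real s - 1) / of_real (exp (1 * t)))
        = t powr (s-1) / exp t" unfolding norm_divide 1 2 ..
    also have "\<dots> = t powr (s-1) * exp(-t)" by (simp add: exp_minus divide_inverse)
    finally show ?thesis .
  qed
  show ?thesis by (rule iffD1[OF integrable_cong[OF eq] h])
qed

lemma fI_cont: "continuous_on {0<..} (fI p n z)"
  unfolding fI_def by (intro continuous_intros) auto

lemma fI_nonneg: "t > 0 \<Longrightarrow> fI p n z t \<ge> 0"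
  unfolding fI_def by simp

lemma fI_pos: "t > 0 \<Longrightarrow> fI p n z t > 0"
  unfolding fI_def by simp

lemma fI_integrable:
  assumes p: "p > 0"
  shows "fI p n z integrable_on {0<..}"
proof -
  let ?g = "\<lambda>t. exp ((1-z)^2/2) * (t powr (p + real n - 1) * exp (-t))"
  have h0: "(\<lambda>t. t powr (p + real n - 1) * exp (-t)) integrable_on {0<..}"
    using gamma_real_integrable[of "p + real n"] p by simp
  have gi: "?g integrable_on {0<..}"
    using integrable_on_cmult_left[OF h0] by simp
  have "fI p n z absolutely_integrable_on {0<..}"
  proof (rule measurable_bounded_by_integrable_imp_absolutely_integrable[OF _ _ gi])
    show "fI p n z \<in> borel_measurable (lebesgue_on {0<..})"
      by (rule continuous_imp_measurable_on_sets_lebesgue[OF fI_cont]) auto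
    show "{0::real<..} \<in> sets lebesgue" by (intro sets_completionI_sets) (simp add: borel_open open_greaterThan)
    fix t :: real assume t: "t \<in> {0<..}"
    hence t0: "t > 0" by simp
    have e1: "t^n * t powr (p-1) = t powr (p + real n - 1)"
      using t0 by (simp add: powr_add powr_realpow[symmetric] powr_diff algebra_simps)
    have e2: "exp(-(t^2)/2 - z*t) \<le> exp ((1-z)^2/2) * exp (-t)"
    proof -
      have "-(t^2)/2 - z*t \<le> (1-z)^2/2 + (-t)"
        using zero_le_power2[of "t - (1 - z)"] by (simp add: power2_eq_square algebra_simps)
      thus ?thesis by (simp add: exp_add[symmetric])
    qed
    have "norm (fI p n z t) = t powr (p + real n - 1) * exp(-(t^2)/2 - z*t)"
      using t0 e1 fI_nonneg[OF t0] by (simp add: fI_def)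
    also have "\<dots> \<le> t powr (p + real n - 1) * (exp ((1-z)^2/2) * exp (-t))"
      by (rule mult_left_mono[OF e2]) simp
    finally show "norm (fI p n z t) \<le> ?g t" by (simp add: algebra_simps)
  qed
  thus ?thesis by (simp add: absolutely_integrable_on_def)
qed


definition J :: "real \<Rightarrow> nat \<Rightarrow> real \<Rightarrow> real" where
  "J p n z = integral {0<..} (fI p n z)"

lemma fI_shift: "fI p n (z+h) t = fI p n z t * exp(-h*t)"
  unfolding fI_def by (simp add: exp_add[symmetric] algebra_simps)

lemma fI_Suc: "fI p (Suc n) z t = t * fI p n z t"
  unfolding fI_def by (simp add: algebra_simps)

lemma fI_2: "fI p (n+2) (z-1) t = t^2 * fI p n z t * exp t"
proof -
  have e: "exp(-(t^2)/2 - (z-1)*t) = exp(-(t^2)/2 - z*t) * exp t"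
    by (subst exp_add[symmetric]) (simp add: algebra_simps)
  show ?thesis unfolding fI_def e by (simp add: power_add power2_eq_square algebra_simps)
qed

lemma J_bound:
  assumes p: "p > 0" and h: "\<bar>h\<bar> \<le> 1"
  shows "\<bar>J p n (z+h) - J p n z + h * J p (Suc n) z\<bar> \<le> h^2 * J p (n+2) (z-1)"
proof -
  note I = fI_integrable[OF p]
  have i1: "(\<lambda>t. fI p n (z+h) t - fI p n z t) integrable_on {0<..}"
    using integrable_diff[OF I[of n "z+h"] I[of n z]] by simp
  have i2: "(\<lambda>t. h * fI p (Suc n) z t) integrable_on {0<..}"
    using integrable_on_cmult_left[OF I[of "Suc n" z]] by simp
  have eq: "J p n (z+h) - J p n z + h * J p (Suc n) z =
     integral {0<..} (\<lambda>t. fI p n (z+h) t - fI p n z t + h * fI p (Suc n) z t)"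
  proof -
    have "integral {0<..} (\<lambda>t. fI p n (z+h) t - fI p n z t + h * fI p (Suc n) z t)
       = integral {0<..} (\<lambda>t. fI p n (z+h) t - fI p n z t) + integral {0<..} (\<lambda>t. h * fI p (Suc n) z t)"
      by (rule integral_add[OF i1 i2])
    also have "integral {0<..} (\<lambda>t. fI p n (z+h) t - fI p n z t) = J p n (z+h) - J p n z"
      unfolding J_def by (rule integral_diff[OF I I])
    also have "integral {0<..} (\<lambda>t. h * fI p (Suc n) z t) = h * J p (Suc n) z"
      unfolding J_def by (rule integral_mult_right)
    finally show ?thesis by simp
  qed
  have eq2: "h^2 * J p (n+2) (z-1) = integral {0<..} (\<lambda>t. h^2 * fI p (n+2) (z-1) t)"
    unfolding J_def by simp
  have "norm (integral {0<..} (\<lambda>t. fI p n (z+h) t - fI p n z t + h * fI p (Suc n) z t))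
        \<le> integral {0<..} (\<lambda>t. h^2 * fI p (n+2) (z-1) t)"
  proof (rule integral_norm_bound_integral)
    show "(\<lambda>t. fI p n (z+h) t - fI p n z t + h * fI p (Suc n) z t) integrable_on {0<..}"
      using integrable_add[OF i1 i2] by simp
    show "(\<lambda>t. h^2 * fI p (n+2) (z-1) t) integrable_on {0<..}"
      using integrable_on_cmult_left[OF I[of "n+2" "z-1"]] by simp
    fix t :: real assume "t \<in> {0<..}"
    hence t: "t > 0" by simp
    have A: "fI p n z t \<ge> 0" using fI_nonneg[OF t] .
    have "fI p n (z+h) t - fI p n z t + h * fI p (Suc n) z t
          = fI p n z t * (exp (-h*t) - 1 - (-h*t))"
      unfolding fI_shift fI_Suc by (simp add: algebra_simps)
    hence "norm (fI p n (z+h) t - fI p n z t + h * fI p (Suc n) z t)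
          = fI p n z t * \<bar>exp (-h*t) - 1 - (-h*t)\<bar>" using A by (simp add: abs_mult)
    also have "\<dots> \<le> fI p n z t * ((-h*t)^2 * exp \<bar>-h*t\<bar>)"
      by (rule mult_left_mono[OF exp_taylor2 A])
    also have "\<dots> \<le> fI p n z t * ((-h*t)^2 * exp t)"
    proof -
      have "\<bar>-h*t\<bar> \<le> t" using h t by (simp add: abs_mult mult_left_le_one_le)
      thus ?thesis by (intro mult_left_mono A) auto
    qed
    also have "\<dots> = h^2 * fI p (n+2) (z-1) t"
      unfolding fI_2 by (simp add: power_mult_distrib algebra_simps)
    finally show "norm (fI p n (z+h) t - fI p n z t + h * fI p (Suc n) z t) \<le> h^2 * fI p (n+2) (z-1) t" .
  qed
  thus ?thesis unfolding eq by (simp add: J_def)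
qed

lemma J_deriv:
  assumes p: "p > 0"
  shows "(J p n has_real_derivative - J p (Suc n) z) (at z)"
proof -
  define C where "C = J p (n+2) (z-1)"
  have "((\<lambda>h. (J p n (z+h) - J p n z) / h - (- J p (Suc n) z)) \<longlongrightarrow> 0) (at 0)"
  proof (rule Lim_null_comparison)
    show "\<forall>\<^sub>F h in at 0. norm ((J p n (z+h) - J p n z) / h - (- J p (Suc n) z)) \<le> \<bar>h\<bar> * C"
      unfolding eventually_at
    proof (intro exI[of _ 1] conjI ballI impI)
      fix h :: real assume "h \<in> UNIV" and hh: "h \<noteq> 0 \<and> dist h 0 < 1"
      hence h0: "h \<noteq> 0" and h1: "\<bar>h\<bar> \<le> 1" by auto
      have "(J p n (z+h) - J p n z) / h - (- J p (Suc n) z) = (J p n (z+h) - J p n z + h * J p (Suc n) z) / h"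
        using h0 by (simp add: field_simps)
      hence "norm ((J p n (z+h) - J p n z) / h - (- J p (Suc n) z)) = \<bar>J p n (z+h) - J p n z + h * J p (Suc n) z\<bar> / \<bar>h\<bar>"
        by simp
      also have "\<dots> \<le> h^2 * C / \<bar>h\<bar>"
        using J_bound[OF p h1, of n z] h0 unfolding C_def by (simp add: divide_right_mono)
      also have "\<dots> = \<bar>h\<bar> * C" using h0 by (simp add: power2_eq_square field_simps)
      finally show "norm ((J p n (z+h) - J p n z) / h - (- J p (Suc n) z)) \<le> \<bar>h\<bar> * C" .
    qed simp
    show "((\<lambda>h. \<bar>h\<bar> * C) \<longlongrightarrow> 0) (at 0)"
      by (rule tendsto_eq_intros | simp)+
  qed
  hence "((\<lambda>h. (J p n (z+h) - J p n z) / h) \<longlongrightarrow> - J p (Suc n) z) (at 0)"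
    by (rule LIM_zero_cancel)
  thus ?thesis by (simp add: DERIV_def)
qed

lemma J_cont: "p > 0 \<Longrightarrow> isCont (J p n) z"
  using J_deriv DERIV_isCont by blast


lemma int_pos:
  fixes f :: "real \<Rightarrow> real"
  assumes cf: "continuous_on {0<..} f" and nn: "\<And>t. t > 0 \<Longrightarrow> f t \<ge> 0"
    and fi: "f integrable_on {0<..}" and t0: "t0 > 0" and ft0: "f t0 > 0"
  shows "integral {0<..} f > 0"
proof -
  have "isCont f t0" using continuous_on_interior[OF cf] t0 by (simp add: interior_open)
  then obtain d where d: "d > 0" "\<forall>x'. dist x' t0 < d \<longrightarrow> dist (f x') (f t0) < f t0 / 2"
    using ft0 unfolding continuous_at_eps_delta by (meson half_gt_zero)
  define e where "e = min (d/2) (t0/2)"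
  have e: "e > 0" "e < d" "e < t0" using d t0 by (auto simp: e_def)
  have sub: "{t0-e..t0+e} \<subseteq> {0<..}" using e by auto
  have ci: "f integrable_on {t0-e..t0+e}"
    by (rule integrable_continuous_interval, rule continuous_on_subset[OF cf sub])
  have low: "f x \<ge> f t0 / 2" if "x \<in> {t0-e..t0+e}" for x
  proof -
    have "dist x t0 < d" using that e by (auto simp: dist_real_def)
    hence "dist (f x) (f t0) < f t0 / 2" using d by blast
    hence "\<bar>f x - f t0\<bar> < f t0 / 2" by (simp add: dist_real_def)
    thus ?thesis by linarith
  qed
  have "integral {t0-e..t0+e} (\<lambda>x. f t0 / 2) \<le> integral {t0-e..t0+e} f"
    by (rule integral_le[OF _ ci low]) (intro integrable_continuous_interval continuous_intros)
  moreover have "integral {t0-e..t0+e} (\<lambda>x. f t0 / 2) = 2 * e * (f t0 / 2)"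
    using e by (simp add: integral_const_real)
  moreover have "integral {t0-e..t0+e} f \<le> integral {0<..} f"
    by (rule integral_subset_le[OF sub ci fi]) (use nn in auto)
  moreover have "2 * e * (f t0 / 2) > 0" using e ft0 by simp
  ultimately show ?thesis by linarith
qed

lemma J_pos: "p > 0 \<Longrightarrow> J p n z > 0"
  unfolding J_def
  by (rule int_pos[OF fI_cont _ fI_integrable _ fI_pos[of 1]]) (auto intro: fI_nonneg)

lemma J_CS:
  assumes p: "p > 0"
  shows "J p 1 z ^ 2 < J p 0 z * J p 2 z"
proof -
  have J0: "J p 0 z > 0" using J_pos[OF p] .
  define l where "l = J p 1 z / J p 0 z"
  let ?g = "\<lambda>t. (t - l)^2 * fI p 0 z t"
  have h0: "(fI p k z has_integral J p k z) {0<..}" for k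
    unfolding J_def using fI_integrable[OF p] by (simp add: has_integral_integrable_integral)
  have "((\<lambda>t. fI p 2 z t - 2 * l * fI p 1 z t + l^2 * fI p 0 z t) has_integral
          (J p 2 z - 2 * l * J p 1 z + l^2 * J p 0 z)) {0<..}"
    by (intro has_integral_add has_integral_diff has_integral_mult_right h0)
  moreover have "fI p 2 z t - 2 * l * fI p 1 z t + l^2 * fI p 0 z t = ?g t" for t
    unfolding fI_def by (simp add: power2_eq_square algebra_simps)
  ultimately have hg: "(?g has_integral (J p 2 z - 2 * l * J p 1 z + l^2 * J p 0 z)) {0<..}"
    by simp
  have "integral {0<..} ?g > 0"
  proof (rule int_pos[of _ "\<bar>l\<bar> + 1"])
    show "continuous_on {0<..} ?g"
      by (intro continuous_intros fI_cont)
    show "?g integrable_on {0<..}" using hg by blast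
    show "?g (\<bar>l\<bar> + 1) > 0"
    proof -
      have "\<bar>l\<bar> + 1 - l \<noteq> 0" by linarith
      thus ?thesis using fI_pos[of "\<bar>l\<bar> + 1" p 0 z] by simp
    qed
  qed (auto intro!: mult_nonneg_nonneg fI_nonneg)
  hence "J p 2 z - 2 * l * J p 1 z + l^2 * J p 0 z > 0" using hg integral_unique by metis
  hence "J p 2 z - J p 1 z ^ 2 / J p 0 z > 0"
    using J0 by (simp add: l_def power2_eq_square field_simps)
  thus ?thesis using J0 by (simp add: field_simps)
qed


lemma psi_eq:
  fixes a b \<sigma> \<rho> x :: real
  assumes b: "b > 0" and s: "\<sigma> > 0"
  shows "psi a b \<sigma> \<rho> x = J (\<rho>/b) 0 (- ((b * x - a) / (\<sigma> * b)) * sqrt (2 * b)) / Gamma (\<rho>/b)"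
proof -
  define y where "y = - ((b * x - a) / (\<sigma> * b)) * sqrt (2 * b)"
  have sq: "(sqrt (2*b))^2 = 2*b" using b by simp
  have A: "(b * x - a)\<^sup>2 / (2 * \<sigma>\<^sup>2 * b) = y^2/4"
    unfolding y_def power_mult_distrib using b s
    by (simp add: sq power2_eq_square field_simps)
  have I: "(\<lambda>t. t powr (- (- \<rho> / b) - 1) * exp (- (t\<^sup>2) / 2 - y * t)) = fI (\<rho>/b) 0 y"
    by (rule ext) (simp add: fI_def)
  have "psi a b \<sigma> \<rho> x = exp (y^2/4) * (exp (- (y\<^sup>2) / 4) / Gamma (\<rho>/b) * J (\<rho>/b) 0 y)"
    unfolding psi_def parD_def A[unfolded y_def] y_def[symmetric] I J_def by simp
  also have "\<dots> = J (\<rho>/b) 0 y / Gamma (\<rho>/b)"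
    by (simp add: exp_minus field_simps)
  finally show ?thesis unfolding y_def .
qed


theorem lemma4p5:
  fixes a b \<sigma> \<rho> c x0 xinf :: real
  assumes "b > 0" and "\<sigma> > 0" and "\<rho> > 0" and "c > 0"
    and "x0 > c"
    and "(x0 - c) * deriv (psi a b \<sigma> \<rho>) x0 - psi a b \<sigma> \<rho> x0 = 0"
    and "\<forall>y>c. (y - c) * deriv (psi a b \<sigma> \<rho>) y - psi a b \<sigma> \<rho> y = 0 \<longrightarrow> y = x0"
    and "xinf > c"
    and "(xinf - c) * deriv (deriv (psi a b \<sigma> \<rho>)) xinf - deriv (psi a b \<sigma> \<rho>) xinf = 0"
    and "\<forall>y>c. (y - c) * deriv (deriv (psi a b \<sigma> \<rho>)) y - deriv (psi a b \<sigma> \<rho>) y = 0 \<longrightarrow> y = xinf"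
  shows "xinf < x0"
proof -
  note b = assms(1) and s = assms(2) and r = assms(3)
  define p where "p = \<rho> / b"
  have p: "p > 0" using b r by (simp add: p_def)
  define G where "G = Gamma p"
  have G: "G > 0" unfolding G_def using p by (simp add: Gamma_real_pos)
  define K where "K = sqrt (2 * b) / \<sigma>"
  have K: "K > 0" using b s by (simp add: K_def)
  define zz where "zz = (\<lambda>x::real. - ((b * x - a) / (\<sigma> * b)) * sqrt (2 * b))"
  have dz: "(zz has_real_derivative - K) (at x)" for x
  proof -
    have "zz = (\<lambda>x. (- (sqrt (2 * b) / \<sigma>)) * x + a * sqrt (2*b) / (\<sigma> * b))"
      unfolding zz_def by (intro ext) (use b s in \<open>simp add: field_simps\<close>)
    moreover have "((\<lambda>x. (- (sqrt (2 * b) / \<sigma>)) * x + a * sqrt (2*b) / (\<sigma> * b)) has_real_derivative (- (sqrt (2 * b) / \<sigma>)) * 1 + 0) (at x)"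
      by (intro DERIV_add DERIV_cmult DERIV_ident DERIV_const)
    hence "((\<lambda>x. (- (sqrt (2 * b) / \<sigma>)) * x + a * sqrt (2*b) / (\<sigma> * b)) has_real_derivative - K) (at x)"
      unfolding K_def by simp
    ultimately show ?thesis by simp
  qed
  have cz: "isCont zz x" for x using dz DERIV_isCont by blast
  define P0 where "P0 = (\<lambda>x. J p 0 (zz x) / G)"
  define P1 where "P1 = (\<lambda>x. K * J p 1 (zz x) / G)"
  define P2 where "P2 = (\<lambda>x. K^2 * J p 2 (zz x) / G)"
  have psi: "psi a b \<sigma> \<rho> = P0"
    unfolding P0_def zz_def G_def p_def by (intro ext psi_eq b s)
  have d0: "(P0 has_real_derivative P1 x) (at x)" for x
  proof -
    have "((\<lambda>x. J p 0 (zz x) / G) has_real_derivative (- J p (Suc 0) (zz x)) * (- K) / G) (at x)"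
      by (intro DERIV_cdivide DERIV_chain2[OF J_deriv[OF p] dz])
    thus ?thesis unfolding P0_def P1_def by (simp add: mult.commute)
  qed
  have d1: "(P1 has_real_derivative P2 x) (at x)" for x
  proof -
    have "((\<lambda>x. K * J p 1 (zz x) / G) has_real_derivative K * ((- J p (Suc 1) (zz x)) * (- K)) / G) (at x)"
      by (intro DERIV_cdivide DERIV_cmult DERIV_chain2[OF J_deriv[OF p] dz])
    thus ?thesis unfolding P1_def P2_def by (simp add: power2_eq_square numeral_2_eq_2 ac_simps)
  qed
  have D1: "deriv (psi a b \<sigma> \<rho>) = P1" unfolding psi using d0 DERIV_imp_deriv by blast
  have D2: "deriv (deriv (psi a b \<sigma> \<rho>)) = P2" unfolding D1 using d1 DERIV_imp_deriv by blast
  have P0pos: "P0 x > 0" for x unfolding P0_def using J_pos[OF p] G by simp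
  have P1pos: "P1 x > 0" for x unfolding P1_def using J_pos[OF p] G K by simp
  define H where "H = (\<lambda>y. (y - c) * P2 y - P1 y)"
  have contH: "continuous_on {c..x0} H"
  proof (rule continuous_at_imp_continuous_on, intro ballI)
    fix x assume "x \<in> {c..x0}"
    have "isCont (\<lambda>y. J p n (zz y)) x" for n
      by (rule isCont_o2[OF cz J_cont[OF p]])
    thus "isCont H x" unfolding H_def P1_def P2_def using G by (intro continuous_intros) auto
  qed
  have Hc: "H c < 0" unfolding H_def using P1pos[of c] by simp
  have e0: "(x0 - c) * P1 x0 = P0 x0" using assms(6) unfolding D1 by (simp add: psi)
  have cs: "P1 x0 ^ 2 < P0 x0 * P2 x0"
  proof -
    have "J p 1 (zz x0) ^ 2 < J p 0 (zz x0) * J p 2 (zz x0)" by (rule J_CS[OF p])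
    hence "K^2 * J p 1 (zz x0) ^ 2 / G^2 < K^2 * (J p 0 (zz x0) * J p 2 (zz x0)) / G^2"
      using K G by (intro divide_strict_right_mono mult_strict_left_mono) auto
    thus ?thesis unfolding P0_def P1_def P2_def by (simp add: power2_eq_square field_simps)
  qed
  have "H x0 * P1 x0 = P0 x0 * P2 x0 - P1 x0 ^ 2"
  proof -
    have "H x0 * P1 x0 = ((x0 - c) * P1 x0) * P2 x0 - P1 x0 ^ 2"
      unfolding H_def by (simp add: power2_eq_square algebra_simps)
    thus ?thesis unfolding e0 .
  qed
  hence "H x0 * P1 x0 > 0" using cs by simp
  hence Hx0: "H x0 > 0" using P1pos[of x0] by (simp add: zero_less_mult_iff)
  obtain y where y: "c \<le> y" "y \<le> x0" "H y = 0"
    using IVT'[of H c 0 x0] Hc Hx0 contH assms(5) by force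
  have "y \<noteq> c" using y Hc by auto
  moreover have "y \<noteq> x0" using y Hx0 by auto
  ultimately have yc: "y > c" and yx: "y < x0" using y by auto
  have "(y - c) * deriv (deriv (psi a b \<sigma> \<rho>)) y - deriv (psi a b \<sigma> \<rho>) y = 0"
    unfolding D2 unfolding D1 using y(3) by (simp add: H_def)
  hence "y = xinf" by (rule assms(10)[rule_format, OF yc])
  thus ?thesis using yx by linarith
qed

end
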